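(* For $k=1,\dots,s-1$, assume the following quantity is defined (denominator nonzero): $$r_k:=\frac{\alpha_k-\beta_k}{h_{k+1}\beta_k-h_{k-1}\alpha_k}.$$ Set $r_0:=P_{\max}$ and $r_s:=0$, and suppose $$0=r_s<r_{s-1}<\cdots<r_1<r_0=P_{\max}.$$ Then the KKT system described in the context has a unique solution. In that solution $I_k=r_k$ for all $k\in\{1,\dots,s-1\}$ and $\lambda_k=0$ for all $k$. Moreover, the optimal power allocation of problem (P) is $I^{**}_k=r_k$ for all $k\in\{1,\dots,s-1\}$.
   Context: Parameters: - $s\ge 2$, $P_{\max}>0$, and positive reals $h_0<h_1<\cdots<h_s$. - Probabilities $\delta_0,\dots,\delta_s$ summing to $1$. - $\theta_k:=\sum_{j=0}^{k-1}\delta_j$ and $\Delta_k:=\theta_k(1-\theta_k)$ for $k=1,\dots,s$. - $\alpha_k:=(h_{k+1}-h_k)\Delta_{k+1}$ and $\beta_k:=(h_k-h_{k-1})\Delta_k$ for $k=1,\dots,s-1$. Problem (P). The variables are $I_1,\dots,I_{s-1}$, with the conventions $I_0:=P_{\max}$ and $I_s:=0$. Maximize $$f(I)=\sum_{i=1}^s\Delta_i\,\frac L2\log\Big(\frac{1+h_iI_{i-1}}{1+h_iI_i}\cdot\frac{1+h_{i-1}I_i}{1+h_{i-1}I_{i-1}}\Big)$$ subject to $I_k\le I_{k-1}$ for all $k=1,\dots,s$. This is the power-allocation problem with $I_k=\sum_{j>k}P_j$. KKT system. Define the Lagrangian $$\mathcal L(I,\lambda)=-f(I)+\sum_{i=1}^s\lambda_i(I_i-I_{i-1}).$$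 The system asks for $(I_1,\dots,I_{s-1},\lambda_1,\dots,\lambda_s)$ such that: - $\partial\mathcal L/\partial I_k=0$ for $k=1,\dots,s-1$, - $\lambda_k(I_k-I_{k-1})=0$, $I_k\le I_{k-1}$ and $\lambda_k\ge0$ for $k=1,\dots,s$. *)

theory Defs
  imports Complex_Main
begin

definition ext :: "real \<Rightarrow> nat \<Rightarrow> (nat \<Rightarrow> real) \<Rightarrow> nat \<Rightarrow> real" where
  "ext Pmax s I k = (if k = 0 then Pmax else if k \<ge> s then 0 else I k)"

definition theta :: "(nat \<Rightarrow> real) \<Rightarrow> nat \<Rightarrow> real" where
  "theta \<delta> k = (\<Sum>j<k. \<delta> j)"

definition Delta :: "(nat \<Rightarrow> real) \<Rightarrow> nat \<Rightarrow> real" where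
  "Delta \<delta> k = theta \<delta> k * (1 - theta \<delta> k)"

definition alpha :: "(nat \<Rightarrow> real) \<Rightarrow> (nat \<Rightarrow> real) \<Rightarrow> nat \<Rightarrow> real" where
  "alpha h \<delta> k = (h (k+1) - h k) * Delta \<delta> (k+1)"

definition beta :: "(nat \<Rightarrow> real) \<Rightarrow> (nat \<Rightarrow> real) \<Rightarrow> nat \<Rightarrow> real" where
  "beta h \<delta> k = (h k - h (k-1)) * Delta \<delta> k"

definition rr :: "(nat \<Rightarrow> real) \<Rightarrow> (nat \<Rightarrow> real) \<Rightarrow> nat \<Rightarrow> real" where
  "rr h \<delta> k = (alpha h \<delta> k - beta h \<delta> k) /
     (h (k+1) * beta h \<delta> k - h (k-1) * alpha h \<delta> k)"

text \<open>Objective f of problem (P); I is given on indices 1..s-1.\<close>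
definition objective ::
  "real \<Rightarrow> (nat \<Rightarrow> real) \<Rightarrow> (nat \<Rightarrow> real) \<Rightarrow> real \<Rightarrow> nat \<Rightarrow> (nat \<Rightarrow> real) \<Rightarrow> real" where
  "objective L h \<delta> Pmax s I =
     (\<Sum>i=1..s. Delta \<delta> i * (L / 2) *
        ln ((1 + h i * ext Pmax s I (i-1)) / (1 + h i * ext Pmax s I i) *
            ((1 + h (i-1) * ext Pmax s I i) / (1 + h (i-1) * ext Pmax s I (i-1)))))"

definition feasible :: "real \<Rightarrow> nat \<Rightarrow> (nat \<Rightarrow> real) \<Rightarrow> bool" where
  "feasible Pmax s I = (\<forall>k\<in>{1..s}. ext Pmax s I k \<le> ext Pmax s I (k-1))"

definition lagrangian ::
  "real \<Rightarrow> (nat \<Rightarrow> real) \<Rightarrow> (nat \<Rightarrow> real) \<Rightarrow> real \<Rightarrow> nat \<Rightarrow> (nat \<Rightarrow> real) \<Rightarrow> (nat \<Rightarrow> real) \<Rightarrow> real" where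
  "lagrangian L h \<delta> Pmax s I lam =
     - objective L h \<delta> Pmax s I +
     (\<Sum>i=1..s. lam i * (ext Pmax s I i - ext Pmax s I (i-1)))"

definition KKT ::
  "real \<Rightarrow> (nat \<Rightarrow> real) \<Rightarrow> (nat \<Rightarrow> real) \<Rightarrow> real \<Rightarrow> nat \<Rightarrow> (nat \<Rightarrow> real) \<Rightarrow> (nat \<Rightarrow> real) \<Rightarrow> bool" where
  "KKT L h \<delta> Pmax s I lam =
    ((\<forall>k\<in>{1..s-1}.
        ((\<lambda>t. lagrangian L h \<delta> Pmax s (I(k := t)) lam) has_real_derivative 0) (at (I k))) \<and>
     (\<forall>k\<in>{1..s}. lam k * (ext Pmax s I k - ext Pmax s I (k-1)) = 0 \<and>
                 ext Pmax s I k \<le> ext Pmax s I (k-1) \<and> lam k \<ge> 0))"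

end

theory Submission
  imports Defs
begin

lemma chain_lt:
  fixes e :: "nat \<Rightarrow> real"
  assumes "\<And>k. k \<in> {1..s} \<Longrightarrow> e k < e (k-1)"
  shows "k < j \<Longrightarrow> j \<le> s \<Longrightarrow> e j < e k"
proof (induction j)
  case 0 then show ?case by simp
next
  case (Suc j)
  have "e (Suc j) < e j" using assms[of "Suc j"] Suc.prems by auto
  then show ?case using Suc by (cases "k = j") auto
qed

lemma chain_le:
  fixes e :: "nat \<Rightarrow> real"
  assumes "\<And>k. k \<in> {1..s} \<Longrightarrow> e k \<le> e (k-1)"
  shows "k \<le> j \<Longrightarrow> j \<le> s \<Longrightarrow> e j \<le> e k"
proof (induction j)
  case 0 then show ?case by simp
next
  case (Suc j)
  have "e (Suc j) \<le> e j" using assms[of "Suc j"] Suc.prems by auto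
  then show ?case using Suc by (cases "k = Suc j") auto
qed

lemma ext_upd:
  assumes "1 \<le> k" "k < s"
  shows "ext Pmax s (I(k:=t)) = (\<lambda>j. if j = k then t else ext Pmax s I j)"
  using assms by (auto simp: ext_def fun_eq_iff)

lemma telescope:
  fixes a b :: "nat \<Rightarrow> real"
  assumes "s \<ge> 1"
  shows "(\<Sum>i=1..s. a (i-1) - b i) = a 0 - b s + (\<Sum>k=1..s-1. a k - b k)"
  using assms
proof (induction s rule: dec_induct)
  case base then show ?case by simp
next
  case (step n)
  have "(\<Sum>i=1..Suc n. a (i-1) - b i) = (\<Sum>i=1..n. a (i-1) - b i) + (a n - b (Suc n))"
    by simp
  also have "\<dots> = a 0 - b n + (\<Sum>k=1..n-1. a k - b k) + (a n - b (Suc n))" using step by simp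
  also have "\<dots> = a 0 - b (Suc n) + ((\<Sum>k=1..n-1. a k - b k) + (a n - b n))" by simp
  also have "(\<Sum>k=1..n-1. a k - b k) + (a n - b n) = (\<Sum>k=1..n. a k - b k)"
    using step.hyps by (cases n) auto
  finally show ?case by simp
qed

lemma theta_bounds:
  assumes "\<And>j. j \<le> s \<Longrightarrow> \<delta> j \<ge> 0" "(\<Sum>j\<le>s. \<delta> j) = 1" "k \<le> s"
  shows "0 \<le> theta \<delta> k" "theta \<delta> k \<le> 1"
proof -
  show "0 \<le> theta \<delta> k" unfolding theta_def using assms by (auto intro: sum_nonneg)
  have "(\<Sum>j<k. \<delta> j) \<le> (\<Sum>j\<le>s. \<delta> j)"
    using assms by (intro sum_mono2) auto
  then show "theta \<delta> k \<le> 1" using assms unfolding theta_def by simp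
qed

lemma Delta_nonneg:
  assumes "\<And>j. j \<le> s \<Longrightarrow> \<delta> j \<ge> 0" "(\<Sum>j\<le>s. \<delta> j) = 1" "k \<le> s"
  shows "0 \<le> Delta \<delta> k"
  using theta_bounds[OF assms] unfolding Delta_def by simp

lemma h_mono:
  fixes h :: "nat \<Rightarrow> real"
  assumes "\<And>k. k < s \<Longrightarrow> h k < h (k+1)"
  shows "a < b \<Longrightarrow> b \<le> s \<Longrightarrow> h a < h b"
proof (induction b)
  case 0 then show ?case by simp
next
  case (Suc b)
  have "h b < h (Suc b)" using assms[of b] Suc.prems by auto
  then show ?case using Suc by (cases "a = b") auto
qed

lemma h_pos:
  fixes h :: "nat \<Rightarrow> real"
  assumes "\<And>k. k < s \<Longrightarrow> h k < h (k+1)" "h 0 > 0" "a \<le> s"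
  shows "h a > 0"
  using h_mono[where s=s and h=h and a=0 and b=a, OF assms(1)] assms by (cases "a = 0") auto

lemma okv:
  fixes h :: "nat \<Rightarrow> real"
  assumes "\<And>k. k < s \<Longrightarrow> h k < h (k+1)" "h 0 > 0" "a \<le> s" "x > -1 / h s"
  shows "1 + h a * x > 0"
proof (cases "x \<ge> 0")
  case True
  then show ?thesis using h_pos[where s=s and h=h, OF assms(1,2,3)] by (simp add: add_pos_nonneg)
next
  case False
  have hs: "h s > 0" using h_pos[where s=s and h=h and a=s, OF assms(1,2)] by simp
  have ha: "h a \<le> h s" using h_mono[where s=s and h=h and a=a and b=s, OF assms(1)] assms(3) by (cases "a = s") auto
  have "h s * x > -1" using assms(4) hs by (simp add: field_simps)
  moreover have "h a * x \<ge> h s * x" using ha False by (simp add: mult_right_mono_neg)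
  ultimately show ?thesis by simp
qed


definition Psi :: "(nat \<Rightarrow> real) \<Rightarrow> (nat \<Rightarrow> real) \<Rightarrow> nat \<Rightarrow> real \<Rightarrow> real" where
  "Psi h \<delta> i x = Delta \<delta> i * (ln (1 + h i * x) - ln (1 + h (i-1) * x))"
definition Psid :: "(nat \<Rightarrow> real) \<Rightarrow> (nat \<Rightarrow> real) \<Rightarrow> nat \<Rightarrow> real \<Rightarrow> real" where
  "Psid h \<delta> i x = Delta \<delta> i * (h i / (1 + h i * x) - h (i-1) / (1 + h (i-1) * x))"
definition GG :: "(nat \<Rightarrow> real) \<Rightarrow> (nat \<Rightarrow> real) \<Rightarrow> nat \<Rightarrow> real \<Rightarrow> real" where
  "GG h \<delta> k x = Psi h \<delta> (k+1) x - Psi h \<delta> k x"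
definition gp :: "(nat \<Rightarrow> real) \<Rightarrow> (nat \<Rightarrow> real) \<Rightarrow> nat \<Rightarrow> real \<Rightarrow> real" where
  "gp h \<delta> k x = Psid h \<delta> (k+1) x - Psid h \<delta> k x"

lemma decomp:
  assumes "s \<ge> 1" "\<And>a j. a \<le> s \<Longrightarrow> j \<le> s \<Longrightarrow> 1 + h a * ext Pmax s I j > 0"
  shows "objective L h \<delta> Pmax s I = L/2 * (Psi h \<delta> 1 (ext Pmax s I 0) - Psi h \<delta> s (ext Pmax s I s)
            + (\<Sum>k=1..s-1. GG h \<delta> k (ext Pmax s I k)))"
proof -
  define e where "e = ext Pmax s I"
  have "objective L h \<delta> Pmax s I = (\<Sum>i=1..s. L/2 * (Psi h \<delta> (i-1+1) (e (i-1)) - Psi h \<delta> i (e i)))"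
    unfolding objective_def
  proof (rule sum.cong[OF refl])
    fix i assume i: "i \<in> {1..s}"
    have p: "1 + h i * e (i-1) > 0" "1 + h i * e i > 0" "1 + h (i-1) * e i > 0" "1 + h (i-1) * e (i-1) > 0"
      using assms(2) i unfolding e_def by auto
    have "ln ((1 + h i * e (i-1)) / (1 + h i * e i) * ((1 + h (i-1) * e i) / (1 + h (i-1) * e (i-1))))
        = ln (1 + h i * e (i-1)) - ln (1 + h i * e i) + (ln (1 + h (i-1) * e i) - ln (1 + h (i-1) * e (i-1)))"
      using p by (simp add: ln_mult_pos ln_divide_pos)
    note lnq = this
    have ii: "i - 1 + 1 = i" using i by simp
    show "Delta \<delta> i * (L / 2) * ln ((1 + h i * ext Pmax s I (i - 1)) / (1 + h i * ext Pmax s I i) *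
            ((1 + h (i - 1) * ext Pmax s I i) / (1 + h (i - 1) * ext Pmax s I (i - 1)))) =
         L / 2 * (Psi h \<delta> (i - 1 + 1) (e (i - 1)) - Psi h \<delta> i (e i))"
      unfolding e_def[symmetric] Psi_def lnq ii by (simp add: algebra_simps)
  qed
  also have "\<dots> = L/2 * (\<Sum>i=1..s. Psi h \<delta> (i-1+1) (e (i-1)) - Psi h \<delta> i (e i))"
    by (simp add: sum_distrib_left)
  also have "(\<Sum>i=1..s. Psi h \<delta> (i-1+1) (e (i-1)) - Psi h \<delta> i (e i))
     = Psi h \<delta> 1 (e 0) - Psi h \<delta> s (e s) + (\<Sum>k=1..s-1. Psi h \<delta> (k+1) (e k) - Psi h \<delta> k (e k))"
    using telescope[OF assms(1), of "\<lambda>j. Psi h \<delta> (j+1) (e j)" "\<lambda>i. Psi h \<delta> i (e i)"] by simp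
  finally show ?thesis unfolding e_def GG_def by simp
qed

lemma dln:
  fixes c x :: real
  assumes "1 + c * x > 0"
  shows "((\<lambda>x. ln (1 + c * x)) has_real_derivative c / (1 + c * x)) (at x)"
  using assms by (auto intro!: derivative_eq_intros)

lemma dGG:
  fixes h :: "nat \<Rightarrow> real"
  assumes "\<And>k. k < s \<Longrightarrow> h k < h (k+1)" "h 0 > 0" "k + 1 \<le> s" "x > -1 / h s"
  shows "(GG h \<delta> k has_real_derivative gp h \<delta> k x) (at x)"
proof -
  have p: "\<And>a. a \<le> s \<Longrightarrow> 1 + h a * x > 0" using okv[OF assms(1,2) _ assms(4)] by blast
  have dP: "(Psi h \<delta> i has_real_derivative Psid h \<delta> i x) (at x)" if "i \<le> s" for i
    unfolding Psi_def Psid_def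
    using that p[of i] p[of "i-1"]
    by (intro DERIV_cmult DERIV_diff dln) auto
  have "((\<lambda>x. Psi h \<delta> (k+1) x - Psi h \<delta> k x) has_real_derivative gp h \<delta> k x) (at x)"
    unfolding gp_def using assms(3) by (intro DERIV_diff dP) auto
  then show ?thesis unfolding GG_def[abs_def] by simp
qed


lemma alg:
  fixes a b c P Q x :: real
  assumes "1 + a*x \<noteq> 0" "1 + b*x \<noteq> 0" "1 + c*x \<noteq> 0"
    "a * ((b - c) * Q) - c * ((a - b) * P) \<noteq> 0"
  shows "P * (a / (1 + a*x) - b / (1 + b*x)) - Q * (b / (1 + b*x) - c / (1 + c*x))
    = (a * ((b - c) * Q) - c * ((a - b) * P)) * (((a - b) * P - (b - c) * Q) / (a * ((b - c) * Q) - c * ((a - b) * P)) - x)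
      / ((1 + a*x) * (1 + b*x) * (1 + c*x))"
proof -
  define D where "D = a * ((b - c) * Q) - c * ((a - b) * P)"
  define A where "A = 1 + a*x"
  define B where "B = 1 + b*x"
  define C where "C = 1 + c*x"
  have nz: "A \<noteq> 0" "B \<noteq> 0" "C \<noteq> 0" "D \<noteq> 0" using assms unfolding A_def B_def C_def D_def by auto
  have r: "D * (((a - b) * P - (b - c) * Q) / D - x) = ((a - b) * P - (b - c) * Q) - D * x"
    using nz by (simp add: field_simps)
  have e1: "a / A - b / B = (a*B - b*A) / (A*B)" using nz by (simp add: field_simps)
  have e2: "b / B - c / C = (b*C - c*B) / (B*C)" using nz by (simp add: field_simps)
  have e3: "a*B - b*A = a - b" "b*C - c*B = b - c" unfolding A_def B_def C_def by algebra+
  have "P * (a / A - b / B) - Q * (b / B - c / C) = (P*(a-b)*C - Q*(b-c)*A) / (A*B*C)"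
    unfolding e1 e2 e3 using nz by (simp add: field_simps)
  also have "P*(a-b)*C - Q*(b-c)*A = ((a - b) * P - (b - c) * Q) - D * x"
    unfolding A_def C_def D_def by algebra
  finally show ?thesis unfolding A_def[symmetric] B_def[symmetric] C_def[symmetric] D_def[symmetric] r .
qed

lemma gp_formula:
  fixes h :: "nat \<Rightarrow> real"
  assumes "\<And>k. k < s \<Longrightarrow> h k < h (k+1)" "h 0 > 0" "k \<in> {1..s-1}" "x > -1 / h s"
    and D: "h (k+1) * beta h \<delta> k - h (k-1) * alpha h \<delta> k \<noteq> 0"
  shows "gp h \<delta> k x = (h (k+1) * beta h \<delta> k - h (k-1) * alpha h \<delta> k) * (rr h \<delta> k - x)
      / ((1 + h (k+1) * x) * (1 + h k * x) * (1 + h (k-1) * x))"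
proof -
  have p: "\<And>a. a \<le> s \<Longrightarrow> 1 + h a * x > 0" using okv[OF assms(1,2) _ assms(4)] by blast
  have pa: "1 + h (k+1) * x > 0" "1 + h k * x > 0" "1 + h (k-1) * x > 0"
    using p assms(3) by auto
  show ?thesis
    unfolding gp_def Psid_def rr_def alpha_def beta_def
    using alg[where a="h (k+1)" and x=x and b="h k" and c="h (k-1)" and P="Delta \<delta> (k+1)" and Q="Delta \<delta> k"] pa D
    unfolding alpha_def beta_def by simp
qed


context
  fixes s :: nat and Pmax L :: real and h \<delta> :: "nat \<Rightarrow> real"
  assumes s2: "s \<ge> 2" and Pp: "Pmax > 0" and Lp: "L > 0"
    and h0: "h 0 > 0" and hm: "\<And>k. k < s \<Longrightarrow> h k < h (k+1)"
    and dn: "\<And>j. j \<le> s \<Longrightarrow> \<delta> j \<ge> 0" and ds: "(\<Sum>j\<le>s. \<delta> j) = 1"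
    and Dnz: "\<And>k. k \<in> {1..s-1} \<Longrightarrow>
           h (k+1) * beta h \<delta> k - h (k-1) * alpha h \<delta> k \<noteq> 0"
    and rch: "\<And>k. k \<in> {1..s} \<Longrightarrow> ext Pmax s (rr h \<delta>) k < ext Pmax s (rr h \<delta>) (k-1)"
begin

lemma rr_pos: assumes k: "k \<in> {1..s-1}" shows "rr h \<delta> k > 0"
proof -
  have "ext Pmax s (rr h \<delta>) s < ext Pmax s (rr h \<delta>) k"
    using k s2 by (intro chain_lt[where e="ext Pmax s (rr h \<delta>)", OF rch]) auto
  then show ?thesis using k s2 by (auto simp: ext_def split: if_splits)
qed

lemma rr_lt: assumes k: "k \<in> {1..s-1}" shows "rr h \<delta> k < Pmax"
proof -
  have "ext Pmax s (rr h \<delta>) k < ext Pmax s (rr h \<delta>) 0"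
    using k s2 by (intro chain_lt[where e="ext Pmax s (rr h \<delta>)", OF rch]) auto
  then show ?thesis using k s2 by (auto simp: ext_def split: if_splits)
qed

lemma hpos: "a \<le> s \<Longrightarrow> h a > 0"
  using h_pos[where s=s and h=h, OF hm h0] by blast

lemma hlt: "a < b \<Longrightarrow> b \<le> s \<Longrightarrow> h a < h b"
  using h_mono[where s=s and h=h, OF hm] by blast

lemma D_pos:
  assumes k: "k \<in> {1..s-1}"
  shows "h (k+1) * beta h \<delta> k - h (k-1) * alpha h \<delta> k > 0"
proof (rule ccontr)
  define a where "a = alpha h \<delta> k"
  define b where "b = beta h \<delta> k"
  define D where "D = h (k+1) * b - h (k-1) * a"
  assume "\<not> ?thesis"
  then have Dn: "D < 0" using Dnz[OF k] unfolding D_def a_def b_def by linarith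
  have "rr h \<delta> k = (a - b) / D" unfolding rr_def a_def b_def D_def by simp
  then have "(a - b) / D > 0" using rr_pos[OF k] by simp
  then have ab: "a < b" using Dn by (simp add: zero_less_divide_iff)
  have ks: "k + 1 \<le> s" using k s2 by auto
  have a0: "a \<ge> 0" unfolding a_def alpha_def
    using Delta_nonneg[OF dn ds ks] hlt[OF _ ks, of k] by (auto intro!: mult_nonneg_nonneg)
  have hkm: "h (k-1) > 0" "h (k-1) < h (k+1)" using hpos[of "k-1"] hlt[of "k-1" "k+1"] k by auto
  have "h (k-1) * a \<le> h (k-1) * b" using ab hkm by simp
  moreover have "(h (k+1) - h (k-1)) * b > 0" using hkm ab a0 by simp
  ultimately have "D > 0" unfolding D_def by (simp add: algebra_simps)
  then show False using Dn by simp
qed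

lemma gp_sign:
  assumes k: "k \<in> {1..s-1}" and x: "x > -1 / h s"
  shows "x < rr h \<delta> k \<Longrightarrow> gp h \<delta> k x > 0" "rr h \<delta> k < x \<Longrightarrow> gp h \<delta> k x < 0"
proof -
  have p: "\<And>a. a \<le> s \<Longrightarrow> 1 + h a * x > 0" using okv[where s=s and h=h, OF hm h0 _ x] by blast
  have den: "(1 + h (k+1) * x) * (1 + h k * x) * (1 + h (k-1) * x) > 0"
    using p[of "k+1"] p[of k] p[of "k-1"] k by auto
  have f: "gp h \<delta> k x = (h (k+1) * beta h \<delta> k - h (k-1) * alpha h \<delta> k) * (rr h \<delta> k - x)
      / ((1 + h (k+1) * x) * (1 + h k * x) * (1 + h (k-1) * x))"
    by (rule gp_formula[where s=s and h=h, OF hm h0 k x Dnz[OF k]])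
  have Dp: "h (k+1) * beta h \<delta> k - h (k-1) * alpha h \<delta> k > 0" by (rule D_pos[OF k])
  show "gp h \<delta> k x > 0" if "x < rr h \<delta> k"
  proof -
    have "(h (k+1) * beta h \<delta> k - h (k-1) * alpha h \<delta> k) * (rr h \<delta> k - x) > 0"
      using Dp that by simp
    then show ?thesis unfolding f using den by simp
  qed
  show "gp h \<delta> k x < 0" if "rr h \<delta> k < x"
  proof -
    have "(h (k+1) * beta h \<delta> k - h (k-1) * alpha h \<delta> k) * (rr h \<delta> k - x) < 0"
      using Dp that by (simp add: mult_pos_neg)
    then show ?thesis unfolding f using den by (simp add: divide_neg_pos)
  qed
qed

lemma gp_zero:
  assumes k: "k \<in> {1..s-1}" and x: "x > -1 / h s"
  shows "gp h \<delta> k x = 0 \<longleftrightarrow> x = rr h \<delta> k"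
  using gp_sign[OF k x] gp_formula[where s=s and h=h, OF hm h0 k x Dnz[OF k]] by (cases "x < rr h \<delta> k"; cases "rr h \<delta> k < x") auto

lemma neg_bound: "-1 / h s < 0" using hpos[of s] by simp

lemma GG_max:
  assumes k: "k \<in> {1..s-1}" and x: "x \<ge> 0" and ne: "x \<noteq> rr h \<delta> k"
  shows "GG h \<delta> k x < GG h \<delta> k (rr h \<delta> k)"
proof -
  have ks: "k + 1 \<le> s" using k s2 by auto
  have d: "\<And>y. y \<ge> 0 \<Longrightarrow> (GG h \<delta> k has_real_derivative gp h \<delta> k y) (at y)"
    using dGG[where s=s and h=h, OF hm h0 ks] neg_bound by (meson less_le_trans)
  have r0: "rr h \<delta> k > 0" using rr_pos[OF k] .
  show ?thesis
  proof (cases "x < rr h \<delta> k")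
    case True
    obtain z where z: "x < z" "z < rr h \<delta> k" "GG h \<delta> k (rr h \<delta> k) - GG h \<delta> k x = (rr h \<delta> k - x) * gp h \<delta> k z"
      using MVT2[OF True, of "GG h \<delta> k" "gp h \<delta> k"] d x by force
    have "gp h \<delta> k z > 0" using gp_sign(1)[OF k _ z(2)] z(1) x neg_bound by linarith
    then have "(rr h \<delta> k - x) * gp h \<delta> k z > 0" using True by (simp add: mult_pos_pos)
    then show ?thesis using z by linarith
  next
    case False
    then have lt: "rr h \<delta> k < x" using ne by simp
    obtain z where z: "rr h \<delta> k < z" "z < x" "GG h \<delta> k x - GG h \<delta> k (rr h \<delta> k) = (x - rr h \<delta> k) * gp h \<delta> k z"
      using MVT2[OF lt, of "GG h \<delta> k" "gp h \<delta> k"] d r0 by force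
    have "gp h \<delta> k z < 0" using gp_sign(2)[OF k _ z(1)] z(1) r0 neg_bound by linarith
    then have "(x - rr h \<delta> k) * gp h \<delta> k z < 0" using lt by (simp add: mult_pos_neg)
    then show ?thesis using z by linarith
  qed
qed

lemma feas_bounds:
  assumes "feasible Pmax s I" "j \<le> s"
  shows "0 \<le> ext Pmax s I j" "ext Pmax s I j \<le> Pmax"
proof -
  have c: "\<And>k. k \<in> {1..s} \<Longrightarrow> ext Pmax s I k \<le> ext Pmax s I (k-1)"
    using assms(1) unfolding feasible_def by blast
  have "ext Pmax s I s \<le> ext Pmax s I j" using chain_le[where s=s and e="ext Pmax s I" and k=j and j=s, OF c] assms(2) by simp
  then show "0 \<le> ext Pmax s I j" using s2 by (simp add: ext_def)
  have "ext Pmax s I j \<le> ext Pmax s I 0" using chain_le[where s=s and e="ext Pmax s I" and k=0 and j=j, OF c] assms(2) by simp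
  then show "ext Pmax s I j \<le> Pmax" by (simp add: ext_def)
qed

lemma deriv_lag:
  assumes k: "k \<in> {1..s-1}" and nn: "\<And>j. j \<le> s \<Longrightarrow> ext Pmax s I j \<ge> 0"
  shows "((\<lambda>t. lagrangian L h \<delta> Pmax s (I(k := t)) lam) has_real_derivative
           (-(L/2 * gp h \<delta> k (I k)) + (lam k - lam (k+1)))) (at (I k))"
proof -
  define E where "E t = (\<lambda>j. if j = k then t else ext Pmax s I j)" for t
  have k1: "1 \<le> k" "k < s" "k + 1 \<le> s" using k s2 by auto
  have eu: "ext Pmax s (I(k:=t)) = E t" for t unfolding E_def using ext_upd[OF k1(1,2)] by simp
  define U where "U = {t::real. -1 / h s < t}"
  have oU: "open U" unfolding U_def by (simp add: open_greaterThan[unfolded greaterThan_def])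
  have Ik: "I k = ext Pmax s I k" using k1 by (simp add: ext_def)
  have Ik0: "I k \<ge> 0" using nn[of k] k1 Ik by simp
  have "-1 / h s < I k" using Ik0 neg_bound by linarith
  then have IU: "I k \<in> U" unfolding U_def by simp
  define c0 where "c0 = Psi h \<delta> 1 (ext Pmax s I 0) - Psi h \<delta> s (ext Pmax s I s)"
  define F where "F t = -(L/2 * (c0 + (\<Sum>k'=1..s-1. GG h \<delta> k' (E t k'))))
      + (\<Sum>i=1..s. lam i * (E t i - E t (i-1)))" for t
  have eq: "F t = lagrangian L h \<delta> Pmax s (I(k := t)) lam" if t: "t \<in> U" for t
  proof -
    have pos: "1 + h a * E t j > 0" if "a \<le> s" "j \<le> s" for a j
    proof -
      have ip: "1 / h s > 0" using hpos[of s] by simp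
      have "E t j > -1 / h s"
      proof (cases "j = k")
        case True then show ?thesis using t by (simp add: E_def U_def)
      next
        case False
        then have "E t j = ext Pmax s I j" by (simp add: E_def)
        then show ?thesis using nn[OF that(2)] neg_bound by linarith
      qed
      then show ?thesis using okv[where s=s and h=h, OF hm h0 that(1)] by blast
    qed
    have "objective L h \<delta> Pmax s (I(k:=t)) = L/2 * (Psi h \<delta> 1 (E t 0) - Psi h \<delta> s (E t s)
            + (\<Sum>k'=1..s-1. GG h \<delta> k' (E t k')))"
      using decomp[of s h Pmax "I(k:=t)" L \<delta>] s2 pos unfolding eu by simp
    moreover have "E t 0 = ext Pmax s I 0" "E t s = ext Pmax s I s" using k1 unfolding E_def by auto
    ultimately show ?thesis unfolding F_def lagrangian_def eu c0_def by simp
  qed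
  have d1: "((\<lambda>t. \<Sum>k'=1..s-1. GG h \<delta> k' (E t k')) has_real_derivative
      (\<Sum>k'=1..s-1. (if k' = k then gp h \<delta> k (I k) else 0))) (at (I k))"
  proof (rule DERIV_sum)
    fix k' assume "k' \<in> {1..s-1}"
    show "((\<lambda>t. GG h \<delta> k' (E t k')) has_real_derivative (if k' = k then gp h \<delta> k (I k) else 0)) (at (I k))"
    proof (cases "k' = k")
      case True
      have "((GG h \<delta> k) has_real_derivative gp h \<delta> k (I k)) (at (I k))"
        using dGG[where s=s and h=h, OF hm h0 k1(3)] Ik0 neg_bound by (meson less_le_trans)
      then show ?thesis using True unfolding E_def by simp
    next
      case False
      then show ?thesis unfolding E_def by simp
    qed
  qed
  have s1: "(\<Sum>k'=1..s-1. (if k' = k then gp h \<delta> k (I k) else 0)) = gp h \<delta> k (I k)"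
    using k by simp
  have dE: "((\<lambda>t. E t j) has_real_derivative (if j = k then 1 else 0)) (at x)" for j x
    unfolding E_def by (cases "j = k") simp_all
  have d2: "((\<lambda>t. \<Sum>i=1..s. lam i * (E t i - E t (i-1))) has_real_derivative
      (\<Sum>i=1..s. lam i * ((if i = k then 1 else 0) - (if i - 1 = k then 1 else 0)))) (at (I k))"
    by (intro DERIV_sum DERIV_cmult DERIV_diff dE)
  have s2': "(\<Sum>i=1..s. lam i * ((if i = k then 1 else 0) - (if i - 1 = k then 1 else 0)))
      = (\<Sum>i=1..s. (if i = k then lam i else 0)) - (\<Sum>i=1..s. (if i = k + 1 then lam i else 0))"
    unfolding sum_subtractf[symmetric] using k1 by (intro sum.cong) auto
  have s3: "(\<Sum>i=1..s. (if i = k then lam i else 0)) = lam k"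
       "(\<Sum>i=1..s. (if i = k + 1 then lam i else 0)) = lam (k+1)" using k1 by simp_all
  have dF: "(F has_real_derivative (-(L/2 * gp h \<delta> k (I k)) + (lam k - lam (k+1)))) (at (I k))"
  proof -
    have "((\<lambda>t. -(L/2 * (c0 + (\<Sum>k'=1..s-1. GG h \<delta> k' (E t k')))) + (\<Sum>i=1..s. lam i * (E t i - E t (i-1))))
       has_real_derivative (-(L/2 * (0 + gp h \<delta> k (I k))) + (lam k - lam (k+1)))) (at (I k))"
      using DERIV_add[OF DERIV_minus[OF DERIV_cmult[OF DERIV_add[OF DERIV_const d1[unfolded s1]]]] d2[unfolded s2' s3], of "L/2" c0] by simp
    then show ?thesis unfolding F_def[abs_def] by simp
  qed
  show ?thesis by (rule has_field_derivative_transform_within_open[OF dF oU IU eq])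
qed

lemma feas_r: "feasible Pmax s (rr h \<delta>)"
  unfolding feasible_def using rch less_imp_le by blast

lemma GG_le:
  assumes k: "k \<in> {1..s-1}" and x: "x \<ge> 0"
  shows "GG h \<delta> k x \<le> GG h \<delta> k (rr h \<delta> k)"
  using GG_max[OF k x] by (cases "x = rr h \<delta> k") auto

lemma obj_form:
  assumes "feasible Pmax s I"
  shows "objective L h \<delta> Pmax s I = L/2 * (Psi h \<delta> 1 Pmax - Psi h \<delta> s 0
            + (\<Sum>k=1..s-1. GG h \<delta> k (I k)))"
proof -
  have pos: "1 + h a * ext Pmax s I j > 0" if "a \<le> s" "j \<le> s" for a j
  proof -
    have "ext Pmax s I j > -1 / h s" using feas_bounds(1)[OF assms that(2)] neg_bound by linarith
    then show ?thesis using okv[where s=s and h=h, OF hm h0 that(1)] by blast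
  qed
  have "(\<Sum>k=1..s-1. GG h \<delta> k (ext Pmax s I k)) = (\<Sum>k=1..s-1. GG h \<delta> k (I k))"
    by (intro sum.cong) (auto simp: ext_def)
  then show ?thesis using decomp[of s h Pmax I L \<delta>, OF _ pos] s2 by (simp add: ext_def)
qed

lemma opt:
  assumes f: "feasible Pmax s I"
  shows "objective L h \<delta> Pmax s I \<le> objective L h \<delta> Pmax s (rr h \<delta>)"
    "objective L h \<delta> Pmax s (rr h \<delta>) \<le> objective L h \<delta> Pmax s I \<Longrightarrow> (\<forall>k\<in>{1..s-1}. I k = rr h \<delta> k)"
proof -
  have I0: "I k \<ge> 0" if "k \<in> {1..s-1}" for k
  proof -
    have "k < s" "k \<noteq> 0" using that s2 by auto
    then show ?thesis using feas_bounds(1)[OF f, of k] by (simp add: ext_def)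
  qed
  have le: "\<forall>k\<in>{1..s-1}. GG h \<delta> k (I k) \<le> GG h \<delta> k (rr h \<delta> k)"
    using GG_le I0 by blast
  have sle: "(\<Sum>k=1..s-1. GG h \<delta> k (I k)) \<le> (\<Sum>k=1..s-1. GG h \<delta> k (rr h \<delta> k))"
    using le by (intro sum_mono) auto
  show "objective L h \<delta> Pmax s I \<le> objective L h \<delta> Pmax s (rr h \<delta>)"
    unfolding obj_form[OF f] obj_form[OF feas_r] using sle Lp by simp
  assume a: "objective L h \<delta> Pmax s (rr h \<delta>) \<le> objective L h \<delta> Pmax s I"
  show "\<forall>k\<in>{1..s-1}. I k = rr h \<delta> k"
  proof (rule ccontr)
    assume "\<not> ?thesis"
    then obtain k where k: "k \<in> {1..s-1}" "I k \<noteq> rr h \<delta> k" by blast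
    have "(\<Sum>k=1..s-1. GG h \<delta> k (I k)) < (\<Sum>k=1..s-1. GG h \<delta> k (rr h \<delta> k))"
      using le GG_max[OF k(1) I0[OF k(1)] k(2)] k(1) by (intro sum_strict_mono_ex1) auto
    then have "objective L h \<delta> Pmax s I < objective L h \<delta> Pmax s (rr h \<delta>)"
      unfolding obj_form[OF f] obj_form[OF feas_r] using Lp by simp
    then show False using a by simp
  qed
qed

lemma kkt_r: "KKT L h \<delta> Pmax s (rr h \<delta>) (\<lambda>_. 0)"
proof -
  have nn: "\<And>j. j \<le> s \<Longrightarrow> ext Pmax s (rr h \<delta>) j \<ge> 0" using feas_bounds(1)[OF feas_r] by blast
  have st: "((\<lambda>t. lagrangian L h \<delta> Pmax s ((rr h \<delta>)(k := t)) (\<lambda>_. 0)) has_real_derivative 0) (at (rr h \<delta> k))"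
    if k: "k \<in> {1..s-1}" for k
  proof -
    have "rr h \<delta> k > -1 / h s" using rr_pos[OF k] neg_bound by linarith
    then have "gp h \<delta> k (rr h \<delta> k) = 0" using gp_zero[OF k] by blast
    then show ?thesis using deriv_lag[OF k nn, of "\<lambda>_. 0"] by simp
  qed
  show ?thesis unfolding KKT_def using st feas_r unfolding feasible_def by auto
qed

lemma kkt_unique:
  assumes K: "KKT L h \<delta> Pmax s I lam"
  shows "(\<forall>k\<in>{1..s-1}. I k = rr h \<delta> k) \<and> (\<forall>k\<in>{1..s}. lam k = 0)"
proof -
  have f: "feasible Pmax s I" using K unfolding KKT_def feasible_def by blast
  have nn: "\<And>j. j \<le> s \<Longrightarrow> ext Pmax s I j \<ge> 0" using feas_bounds(1)[OF f] by blast
  have sl: "\<And>k. k \<in> {1..s} \<Longrightarrow> lam k * (ext Pmax s I k - ext Pmax s I (k-1)) = 0 \<and> lam k \<ge> 0"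
    using K unfolding KKT_def by blast
  have stat: "lam k - lam (k+1) = L/2 * gp h \<delta> k (I k)" if k: "k \<in> {1..s-1}" for k
  proof -
    have d0: "((\<lambda>t. lagrangian L h \<delta> Pmax s (I(k := t)) lam) has_real_derivative 0) (at (I k))"
      using K k unfolding KKT_def by blast
    have "-(L/2 * gp h \<delta> k (I k)) + (lam k - lam (k+1)) = 0"
      using DERIV_unique[OF deriv_lag[OF k nn] d0] .
    then show ?thesis by simp
  qed
  have Ix: "I k > -1 / h s" "ext Pmax s I k = I k" if k: "k \<in> {1..s-1}" for k
  proof -
    show e: "ext Pmax s I k = I k" using k by (auto simp: ext_def)
    have "0 \<le> I k" using nn[of k] k e by auto
    then show "I k > -1 / h s" using neg_bound by linarith
  qed
  have er: "ext Pmax s (rr h \<delta>) k = rr h \<delta> k" if "k \<in> {1..s-1}" for k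
    using that by (auto simp: ext_def)
  have Q: "\<not> (lam m > 0 \<and> ext Pmax s I (m-1) < ext Pmax s (rr h \<delta>) (m-1))" if "1 \<le> m" "m \<le> s" for m
    using that
  proof (induction m)
    case 0 then show ?case by simp
  next
    case (Suc n)
    show ?case
    proof (cases "n = 0")
      case True then show ?thesis by (simp add: ext_def)
    next
      case False
      then have n: "n \<in> {1..s-1}" using Suc.prems by auto
      show ?thesis
      proof
        assume a: "lam (Suc n) > 0 \<and> ext Pmax s I (Suc n - 1) < ext Pmax s (rr h \<delta>) (Suc n - 1)"
        then have lt: "I n < rr h \<delta> n" using Ix(2)[OF n] er[OF n] by simp
        have "gp h \<delta> n (I n) > 0" using gp_sign(1)[OF n Ix(1)[OF n] lt] .
        then have "lam n > 0" using stat[OF n] a Lp by (simp add: algebra_simps) (smt (verit) mult_pos_pos)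
        moreover have "lam n * (ext Pmax s I n - ext Pmax s I (n-1)) = 0" using sl[of n] n by auto
        ultimately have "ext Pmax s I (n-1) = I n" using Ix(2)[OF n] by simp
        moreover have "ext Pmax s (rr h \<delta>) n < ext Pmax s (rr h \<delta>) (n-1)" using rch[of n] n by auto
        ultimately have "lam n > 0 \<and> ext Pmax s I (n-1) < ext Pmax s (rr h \<delta>) (n-1)"
          using `lam n > 0` lt er[OF n] by simp
        moreover have "n \<le> s" using n by auto
        ultimately show False using Suc.IH n by auto
      qed
    qed
  qed
  have z: "lam (s - n) = 0" if "n < s" for n
    using that
  proof (induction n)
    case 0
    show ?case
    proof (rule ccontr)
      assume "lam (s - 0) \<noteq> 0"
      then have lp: "lam s > 0" using sl[of s] s2 by auto
      then have "ext Pmax s I (s-1) = ext Pmax s I s" using sl[of s] s2 by auto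
      then have "ext Pmax s I (s-1) = 0" using s2 by (simp add: ext_def)
      moreover have "ext Pmax s (rr h \<delta>) (s-1) > 0" using rr_pos[of "s-1"] s2 er[of "s-1"] by auto
      ultimately show False using Q[of s] lp s2 by auto
    qed
  next
    case (Suc n)
    define j where "j = s - Suc n"
    have j: "j \<in> {1..s-1}" "j + 1 = s - n" using Suc.prems unfolding j_def by auto
    have l1: "lam (j+1) = 0" using Suc j by simp
    have js: "j \<in> {1..s}" using j by auto
    show ?case unfolding j_def[symmetric]
    proof (rule ccontr)
      assume "lam j \<noteq> 0"
      then have lp: "lam j > 0" using sl[OF js] by auto
      then have "gp h \<delta> j (I j) > 0" using stat[OF j(1)] l1 Lp by (smt (verit) mult_pos_pos zero_less_divide_iff mult_nonneg_nonpos)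
      then have lt: "I j < rr h \<delta> j"
        using gp_sign(2)[OF j(1) Ix(1)[OF j(1)]] gp_zero[OF j(1) Ix(1)[OF j(1)]] by fastforce
      have "ext Pmax s I (j-1) = I j" using sl[OF js] lp Ix(2)[OF j(1)] by auto
      moreover have "ext Pmax s (rr h \<delta>) j < ext Pmax s (rr h \<delta>) (j-1)" using rch[of j] j by auto
      ultimately show False using Q[of j] js lp lt er[OF j(1)] by auto
    qed
  qed
  have lz: "\<forall>k\<in>{1..s}. lam k = 0"
  proof
    fix k assume k: "k \<in> {1..s}"
    then have "k = s - (s - k)" "s - k < s" by auto
    then show "lam k = 0" using z[of "s - k"] by metis
  qed
  have "\<forall>k\<in>{1..s-1}. I k = rr h \<delta> k"
  proof
    fix k assume k: "k \<in> {1..s-1}"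
    have "k + 1 \<in> {1..s}" "k \<in> {1..s}" using k by auto
    then have "gp h \<delta> k (I k) = 0" using stat[OF k] lz Lp by auto
    then show "I k = rr h \<delta> k" using gp_zero[OF k Ix(1)[OF k]] by blast
  qed
  then show ?thesis using lz by blast
qed

end

theorem lemma1:
  fixes s :: nat and Pmax L :: real and h \<delta> :: "nat \<Rightarrow> real"
  assumes "s \<ge> 2" and "Pmax > 0" and "L > 0"
    and "h 0 > 0" and "\<And>k. k < s \<Longrightarrow> h k < h (k+1)"
    and "\<And>j. j \<le> s \<Longrightarrow> \<delta> j \<ge> 0" and "(\<Sum>j\<le>s. \<delta> j) = 1"
    and "\<And>k. k \<in> {1..s-1} \<Longrightarrow>
           h (k+1) * beta h \<delta> k - h (k-1) * alpha h \<delta> k \<noteq> 0"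
    and "\<And>k. k \<in> {1..s} \<Longrightarrow> ext Pmax s (rr h \<delta>) k < ext Pmax s (rr h \<delta>) (k-1)"
  shows "KKT L h \<delta> Pmax s (rr h \<delta>) (\<lambda>_. 0)
    \<and> (\<forall>I lam. KKT L h \<delta> Pmax s I lam \<longrightarrow>
          (\<forall>k\<in>{1..s-1}. I k = rr h \<delta> k) \<and> (\<forall>k\<in>{1..s}. lam k = 0))
    \<and> feasible Pmax s (rr h \<delta>)
    \<and> (\<forall>I. feasible Pmax s I \<longrightarrow>
          objective L h \<delta> Pmax s I \<le> objective L h \<delta> Pmax s (rr h \<delta>))
    \<and> (\<forall>I. feasible Pmax s I \<and>
          (\<forall>I'. feasible Pmax s I' \<longrightarrow> objective L h \<delta> Pmax s I' \<le> objective L h \<delta> Pmax s I)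
          \<longrightarrow> (\<forall>k\<in>{1..s-1}. I k = rr h \<delta> k))"
proof -
  note A = assms
  have 1: "KKT L h \<delta> Pmax s (rr h \<delta>) (\<lambda>_. 0)" by (rule kkt_r[OF A])
  have 2: "\<forall>I lam. KKT L h \<delta> Pmax s I lam \<longrightarrow>
          (\<forall>k\<in>{1..s-1}. I k = rr h \<delta> k) \<and> (\<forall>k\<in>{1..s}. lam k = 0)"
    using kkt_unique[OF A] by blast
  have 3: "feasible Pmax s (rr h \<delta>)" by (rule feas_r[OF A])
  have 4: "\<forall>I. feasible Pmax s I \<longrightarrow>
          objective L h \<delta> Pmax s I \<le> objective L h \<delta> Pmax s (rr h \<delta>)"
    using opt(1)[OF A] by blast
  have 5: "\<forall>I. feasible Pmax s I \<and>
          (\<forall>I'. feasible Pmax s I' \<longrightarrow> objective L h \<delta> Pmax s I' \<le> objective L h \<delta> Pmax s I)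
          \<longrightarrow> (\<forall>k\<in>{1..s-1}. I k = rr h \<delta> k)"
    using opt(2)[OF A] 3 by blast
  show ?thesis using 1 2 3 4 5 by blast
qed

end
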